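(* Suppose $(\eta,\omega_G)$, with $\eta(0)\in\operatorname{im}B^T$, is a solution of \[ \dot\eta=B_S^T\omega_G,\qquad M\dot\omega_G=-A\omega_G-B_G\Gamma\eta+u . \] Define $\eta_S=\Pi^T\eta$ with $\Pi=I-\Gamma B_L^T(B_L\Gamma B_L^T)^{-1}B_L$. Then $(\eta_S,\omega_G)$ is a solution of \[ \dot\eta_S=B_S^T\omega_G,\qquad M\dot\omega_G=-A\omega_G-B_S\Gamma\eta_S+u-\hat p, \] where $\hat p=B_G\Gamma B_L^T(B_L\Gamma B_L^T)^{-1}p^\ast$ and $p^\ast=B_L\Gamma\eta(t)$ (a constant vector, conserved along the solution).
   Context: A connected undirected graph with $n$ nodes and $m$ edges, nodes partitioned into $n_g$ generator and $n_\ell$ load nodes; $B$ is an incidence matrix partitioned row-wise as $B=\begin{bmatrix}B_G^T & B_L^T\end{bmatrix}^T$. $\Gamma=\mathrm{diag}(\gamma_k)$ is positive definite (constant), $M,A$ positive definite diagonal, $u\in\mathbb{R}^{n_g}$. Here $B_S$ is the constant projected incidence matrix $B_S=B_G\big(I-\Gamma B_L^T(B_L\Gamma B_L^T)^{-1}B_L\big)$. The first system is obtained from the nonlinear reduced model by neglecting the state dependence of $B_S$ and replacing $\sin(\eta)$ by $\eta$. *)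

theory Defs
  imports "HOL-Analysis.Analysis"
begin

text \<open>Nodes are of type 'g + 'l (generator nodes Inl, load nodes Inr); edges of type 'e.
  B :: real^'e^('g::finite+'l::finite) is the node-edge incidence matrix of an oriented graph.\<close>

definition incidence_matrix :: "real^'e^'v \<Rightarrow> bool" where
  "incidence_matrix B \<longleftrightarrow>
     (\<forall>e. \<exists>i j. i \<noteq> j \<and> B $ i $ e = 1 \<and> B $ j $ e = -1 \<and>
              (\<forall>k. k \<noteq> i \<and> k \<noteq> j \<longrightarrow> B $ k $ e = 0))"

definition graph_adj :: "real^'e^'v \<Rightarrow> ('v \<times> 'v) set" where
  "graph_adj B = {(i, j). i \<noteq> j \<and> (\<exists>e. B $ i $ e \<noteq> 0 \<and> B $ j $ e \<noteq> 0)}"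

definition graph_connected :: "real^'e^'v \<Rightarrow> bool" where
  "graph_connected B \<longleftrightarrow> (\<forall>i j. (i, j) \<in> (graph_adj B)\<^sup>*)"

definition pos_diag :: "real^'n^'n \<Rightarrow> bool" where
  "pos_diag D \<longleftrightarrow> (\<forall>i j. i \<noteq> j \<longrightarrow> D $ i $ j = 0) \<and> (\<forall>i. D $ i $ i > 0)"

definition BG :: "real^'e^('g::finite+'l::finite) \<Rightarrow> real^'e^'g" where
  "BG B = (\<chi> i j. B $ Inl i $ j)"

definition BL :: "real^'e^('g::finite+'l::finite) \<Rightarrow> real^'e^'l" where
  "BL B = (\<chi> i j. B $ Inr i $ j)"

definition Pi_mat :: "real^'e^('g::finite+'l::finite) \<Rightarrow> real^'e^'e \<Rightarrow> real^'e^'e" where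
  "Pi_mat B \<Gamma> = mat 1 - \<Gamma> ** transpose (BL B) ** matrix_inv (BL B ** \<Gamma> ** transpose (BL B)) ** BL B"

definition BS :: "real^'e^('g::finite+'l::finite) \<Rightarrow> real^'e^'e \<Rightarrow> real^'e^'g" where
  "BS B \<Gamma> = BG B ** Pi_mat B \<Gamma>"

definition p_hat :: "real^'e^('g::finite+'l::finite) \<Rightarrow> real^'e^'e \<Rightarrow> real^'l \<Rightarrow> real^'g" where
  "p_hat B \<Gamma> p = (BG B ** \<Gamma> ** transpose (BL B) ** matrix_inv (BL B ** \<Gamma> ** transpose (BL B))) *v p"

end

theory Submission
  imports Defs
begin

lemma sum_UNIV_sum:
  fixes f :: "('g::finite + 'l::finite) \<Rightarrow> real"
  shows "sum f UNIV = (\<Sum>g\<in>UNIV. f (Inl g)) + (\<Sum>l\<in>UNIV. f (Inr l))"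
proof -
  have U: "(UNIV :: ('g+'l) set) = range Inl \<union> range Inr"
    by (rule set_eqI, case_tac x) auto
  have "sum f UNIV = sum f (range Inl) + sum f (range Inr)"
    unfolding U by (rule sum.union_disjoint) auto
  also have "\<dots> = (\<Sum>g\<in>UNIV. f (Inl g)) + (\<Sum>l\<in>UNIV. f (Inr l))"
    by (simp add: sum.reindex)
  finally show ?thesis .
qed

lemma incidence_const:
  fixes B :: "real^'e::finite^'v::finite" and y :: "'v \<Rightarrow> real"
  assumes inc: "incidence_matrix B" and conn: "graph_connected B"
    and z: "\<And>e. (\<Sum>k\<in>UNIV. B $ k $ e * y k) = 0"
  shows "y i = y j"
proof -
  have adj: "y a = y b" if "(a, b) \<in> graph_adj B" for a b
  proof -
    from that obtain e where ab: "a \<noteq> b" "B $ a $ e \<noteq> 0" "B $ b $ e \<noteq> 0"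
      unfolding graph_adj_def by auto
    from inc obtain p q where pq: "p \<noteq> q" "B $ p $ e = 1" "B $ q $ e = -1"
      "\<And>k. k \<noteq> p \<and> k \<noteq> q \<Longrightarrow> B $ k $ e = 0"
      unfolding incidence_matrix_def by blast
    have "(\<Sum>k\<in>UNIV. B $ k $ e * y k) = (\<Sum>k\<in>{p,q}. B $ k $ e * y k)"
      by (rule sum.mono_neutral_right) (use pq in auto)
    also have "\<dots> = y p - y q" using pq by simp
    finally have "y p = y q" using z[of e] by simp
    moreover have "a = p \<or> a = q" "b = p \<or> b = q" using ab pq(4) by blast+
    ultimately show ?thesis by auto
  qed
  have "(i, j) \<in> (graph_adj B)\<^sup>*" using conn unfolding graph_connected_def by blast
  then show ?thesis
    by (induction rule: rtrancl_induct) (auto dest: adj)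
qed

lemma K_invertible:
  fixes B :: "real^'e::finite^('g::finite + 'l::finite)" and \<Gamma> :: "real^'e^'e"
  assumes inc: "incidence_matrix B" and conn: "graph_connected B" and Gam: "pos_diag \<Gamma>"
  shows "invertible (BL B ** \<Gamma> ** transpose (BL B))"
  unfolding invertible_left_inverse matrix_left_invertible_ker
proof (intro allI impI)
  fix x assume Kx: "(BL B ** \<Gamma> ** transpose (BL B)) *v x = 0"
  define z where "z = x v* BL B"
  have Gz: "\<Gamma> *v z = (\<chi> e. \<Gamma> $ e $ e * z $ e)"
  proof -
    have "(\<Sum>j\<in>UNIV. \<Gamma> $ e $ j * z $ j) = \<Gamma> $ e $ e * z $ e" for e
    proof -
      have "(\<Sum>j\<in>UNIV. \<Gamma> $ e $ j * z $ j) = (\<Sum>j\<in>{e}. \<Gamma> $ e $ j * z $ j)"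
        by (rule sum.mono_neutral_right) (use Gam in \<open>auto simp: pos_diag_def\<close>)
      then show ?thesis by simp
    qed
    then show ?thesis by (simp add: matrix_vector_mult_def)
  qed
  have "0 = inner x ((BL B ** \<Gamma> ** transpose (BL B)) *v x)" using Kx by simp
  also have "\<dots> = inner x (BL B *v (\<Gamma> *v z))"
    by (simp add: z_def matrix_vector_mul_assoc[symmetric] del: transpose_matrix_vector)
       (simp add: matrix_vector_mul_assoc)
  also have "\<dots> = inner z (\<Gamma> *v z)" by (simp add: z_def dot_lmul_matrix[symmetric])
  also have "\<dots> = (\<Sum>e\<in>UNIV. \<Gamma> $ e $ e * (z $ e)^2)"
    by (simp add: Gz inner_vec_def power2_eq_square mult.commute mult.left_commute)
  finally have s0: "(\<Sum>e\<in>UNIV. \<Gamma> $ e $ e * (z $ e)^2) = 0" by simp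
  have "\<forall>e\<in>UNIV. \<Gamma> $ e $ e * (z $ e)^2 = 0"
    by (rule sum_nonneg_eq_0_iff[THEN iffD1, OF _ _ s0]) (use Gam in \<open>auto simp: pos_diag_def less_imp_le\<close>)
  then have ze: "z $ e = 0" for e using Gam unfolding pos_diag_def by (metis UNIV_I less_irrefl mult_eq_0_iff power_eq_0_iff)
  define y :: "'g + 'l \<Rightarrow> real" where "y = (\<lambda>k. case k of Inl _ \<Rightarrow> 0 | Inr l \<Rightarrow> x $ l)"
  have "(\<Sum>k\<in>UNIV. B $ k $ e * y k) = 0" for e
    using ze[of e] by (simp add: sum_UNIV_sum y_def z_def vector_matrix_mult_def BL_def mult.commute)
  then have yc: "y i = y j" for i j using incidence_const[OF inc conn] by blast
  show "x = 0"
  proof (rule vec_eq_iff[THEN iffD2, rule_format])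
    fix l
    obtain g :: 'g where True by blast
    show "x $ l = 0 $ l" using yc[of "Inr l" "Inl g"] by (simp add: y_def)
  qed
qed

lemma mdiff_right: "((A::real^'n^'m) - B) ** (C::real^'p^'n) = A ** C - B ** C"
  by (simp add: vec_eq_iff matrix_matrix_mult_def sum_subtractf algebra_simps)
lemma mdiff_left: "(C::real^'n^'m) ** ((A::real^'p^'n) - B) = C ** A - C ** B"
  by (simp add: vec_eq_iff matrix_matrix_mult_def sum_subtractf algebra_simps)
lemma transpose_diff: "transpose ((A::real^'n^'m) - B) = transpose A - transpose B"
  by (simp add: vec_eq_iff transpose_def)

lemma alg:
  fixes L :: "real^'e^'l" and G :: "real^'e^'e" and Ki :: "real^'l^'l" and BGm :: "real^'e^'g"
  assumes KKi: "L ** G ** transpose L ** Ki = mat 1"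
    and Gt: "transpose G = G" and Kit: "transpose Ki = Ki"
  shows "L ** G ** transpose (mat 1 - G ** transpose L ** Ki ** L) = 0"
    and "transpose (mat 1 - G ** transpose L ** Ki ** L) ** transpose (mat 1 - G ** transpose L ** Ki ** L) = transpose (mat 1 - G ** transpose L ** Ki ** L)"
    and "BGm ** G = BGm ** (mat 1 - G ** transpose L ** Ki ** L) ** G ** transpose (mat 1 - G ** transpose L ** Ki ** L) + BGm ** G ** transpose L ** Ki ** L ** G"
proof -
  have K': "X ** L ** G ** transpose L ** Ki = X" for X :: "real^'l^'q"
    by (metis KKi matrix_mul_assoc matrix_mul_rid)
  have Pt: "transpose (mat 1 - G ** transpose L ** Ki ** L) = mat 1 - transpose L ** Ki ** L ** G"
    by (simp add:  transpose_diff matrix_transpose_mul Gt Kit matrix_mul_assoc)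
  show "L ** G ** transpose (mat 1 - G ** transpose L ** Ki ** L) = 0"
    unfolding Pt by (simp add: mdiff_left matrix_mul_assoc KKi)
  show "transpose (mat 1 - G ** transpose L ** Ki ** L) ** transpose (mat 1 - G ** transpose L ** Ki ** L) = transpose (mat 1 - G ** transpose L ** Ki ** L)"
    unfolding Pt by (simp add: mdiff_left mdiff_right matrix_mul_assoc K')
  show "BGm ** G = BGm ** (mat 1 - G ** transpose L ** Ki ** L) ** G ** transpose (mat 1 - G ** transpose L ** Ki ** L) + BGm ** G ** transpose L ** Ki ** L ** G"
    unfolding Pt by (simp add: mdiff_left mdiff_right matrix_mul_assoc K')
qed
theorem proposition4:
  fixes B :: "real^'e::finite^('g::finite + 'l::finite)"
    and \<Gamma> :: "real^'e^'e" and M A :: "real^'g^'g" and u :: "real^'g"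
    and \<eta> :: "real \<Rightarrow> real^'e" and \<omega> :: "real \<Rightarrow> real^'g"
  assumes inc: "incidence_matrix B"
    and conn: "graph_connected B"
    and Gam: "pos_diag \<Gamma>" and Mpos: "pos_diag M" and Apos: "pos_diag A"
    and init: "\<eta> 0 \<in> range (\<lambda>x. transpose B *v x)"
    and eq1: "\<forall>t\<ge>0. (\<eta> has_vector_derivative (transpose (BS B \<Gamma>) *v \<omega> t)) (at t within {0..})"
    and eq2: "\<forall>t\<ge>0. \<exists>d. (\<omega> has_vector_derivative d) (at t within {0..}) \<and>
                 M *v d = - (A *v \<omega> t) - (BG B ** \<Gamma>) *v \<eta> t + u"
  shows "let \<eta>S = (\<lambda>t. transpose (Pi_mat B \<Gamma>) *v \<eta> t);
             pstar = (BL B ** \<Gamma>) *v \<eta> 0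
         in (\<forall>t\<ge>0. (BL B ** \<Gamma>) *v \<eta> t = pstar) \<and>
            (\<forall>t\<ge>0. (\<eta>S has_vector_derivative (transpose (BS B \<Gamma>) *v \<omega> t)) (at t within {0..})) \<and>
            (\<forall>t\<ge>0. \<exists>d. (\<omega> has_vector_derivative d) (at t within {0..}) \<and>
                 M *v d = - (A *v \<omega> t) - (BS B \<Gamma> ** \<Gamma>) *v \<eta>S t + u - p_hat B \<Gamma> pstar)"
proof -
  define L where "L = BL B"
  define K where "K = L ** \<Gamma> ** transpose L"
  define Ki where "Ki = matrix_inv K"
  define Pt where "Pt = transpose (Pi_mat B \<Gamma>)"
  have invK: "invertible K" unfolding K_def L_def by (rule K_invertible[OF inc conn Gam])
  have KKi: "K ** Ki = mat 1" and KiK: "Ki ** K = mat 1"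
    using someI_ex[OF invK[unfolded invertible_def]] unfolding Ki_def matrix_inv_def by auto
  have Gt: "transpose \<Gamma> = \<Gamma>"
    using Gam unfolding pos_diag_def transpose_def vec_eq_iff by (metis vec_lambda_beta)
  have Kt: "transpose K = K"
    by (simp add: K_def matrix_transpose_mul Gt matrix_mul_assoc)
  have "transpose Ki ** K = mat 1"
    by (metis Kt KKi matrix_transpose_mul transpose_mat)
  then have Kit: "transpose Ki = Ki"
    by (metis KKi matrix_mul_assoc matrix_mul_lid matrix_mul_rid)
  have Pi_eq: "Pi_mat B \<Gamma> = mat 1 - \<Gamma> ** transpose L ** Ki ** L"
    by (simp add: Pi_mat_def L_def Ki_def K_def)
  have KKi': "L ** \<Gamma> ** transpose L ** Ki = mat 1" using KKi by (simp add: K_def)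
  have A1: "L ** \<Gamma> ** Pt = 0" using alg(1)[OF KKi' Gt Kit] by (simp add: Pt_def Pi_eq)
  have A2: "Pt ** Pt = Pt" using alg(2)[OF KKi' Gt Kit] by (simp add: Pt_def Pi_eq)
  have A3: "BG B ** \<Gamma> = BG B ** Pi_mat B \<Gamma> ** \<Gamma> ** Pt + BG B ** \<Gamma> ** transpose L ** Ki ** L ** \<Gamma>"
    using alg(3)[OF KKi' Gt Kit, where BGm="BG B"] by (simp add: Pt_def Pi_eq)
  have BSt: "transpose (BS B \<Gamma>) = Pt ** transpose (BG B)"
    by (simp add: BS_def matrix_transpose_mul Pt_def)
  have c1: "(L ** \<Gamma>) *v \<eta> t = (L ** \<Gamma>) *v \<eta> 0" if "t \<ge> 0" for t
  proof (rule has_derivative_zero_unique[where s="{0..}" and f="\<lambda>t. (L ** \<Gamma>) *v \<eta> t"])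
    show "convex {0::real..}" by (rule convex_real_interval)
    show "t \<in> {0..}" "0 \<in> {0::real..}" using that by auto
    fix x :: real assume "x \<in> {0..}"
    then have "((\<lambda>t. (L ** \<Gamma>) *v \<eta> t) has_vector_derivative
                 (L ** \<Gamma>) *v (transpose (BS B \<Gamma>) *v \<omega> x)) (at x within {0..})"
      using eq1 by (intro bounded_linear.has_vector_derivative[OF matrix_vector_mul_bounded_linear]) auto
    moreover have "(L ** \<Gamma>) *v (transpose (BS B \<Gamma>) *v \<omega> x) = 0"
      unfolding BSt matrix_vector_mul_assoc
      by (simp add: matrix_mul_assoc A1 del: transpose_matrix_vector)
    ultimately show "((\<lambda>t. (L ** \<Gamma>) *v \<eta> t) has_derivative (\<lambda>h. 0)) (at x within {0..})"
      by (simp add: has_vector_derivative_def)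
  qed
  show ?thesis
    unfolding Let_def
  proof (intro conjI allI impI)
    fix t :: real assume t: "t \<ge> 0"
    show "(BL B ** \<Gamma>) *v \<eta> t = (BL B ** \<Gamma>) *v \<eta> 0" using c1[OF t] by (simp add: L_def)
    have "((\<lambda>t. Pt *v \<eta> t) has_vector_derivative Pt *v (transpose (BS B \<Gamma>) *v \<omega> t)) (at t within {0..})"
      using eq1 t by (intro bounded_linear.has_vector_derivative[OF matrix_vector_mul_bounded_linear]) auto
    moreover have "Pt *v (transpose (BS B \<Gamma>) *v \<omega> t) = transpose (BS B \<Gamma>) *v \<omega> t"
      unfolding BSt matrix_vector_mul_assoc
      by (simp add: matrix_mul_assoc A2 del: transpose_matrix_vector)
    ultimately show "((\<lambda>t. transpose (Pi_mat B \<Gamma>) *v \<eta> t) has_vector_derivative transpose (BS B \<Gamma>) *v \<omega> t) (at t within {0..})"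
      by (simp add: Pt_def)
    obtain d where d: "(\<omega> has_vector_derivative d) (at t within {0..})"
      "M *v d = - (A *v \<omega> t) - (BG B ** \<Gamma>) *v \<eta> t + u" using eq2 t by blast
    have key: "(BG B ** \<Gamma>) *v \<eta> t = (BS B \<Gamma> ** \<Gamma>) *v (transpose (Pi_mat B \<Gamma>) *v \<eta> t)
                 + p_hat B \<Gamma> ((BL B ** \<Gamma>) *v \<eta> 0)"
    proof -
      have "p_hat B \<Gamma> ((BL B ** \<Gamma>) *v \<eta> 0) = (BG B ** \<Gamma> ** transpose L ** Ki) *v ((L ** \<Gamma>) *v \<eta> t)"
        using c1[OF t] by (simp add: p_hat_def L_def Ki_def K_def)
      also have "\<dots> = (BG B ** \<Gamma> ** transpose L ** Ki ** L ** \<Gamma>) *v \<eta> t"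
        by (simp add: matrix_vector_mul_assoc matrix_mul_assoc del: transpose_matrix_vector)
      finally have "p_hat B \<Gamma> ((BL B ** \<Gamma>) *v \<eta> 0) = (BG B ** \<Gamma> ** transpose L ** Ki ** L ** \<Gamma>) *v \<eta> t" .
      moreover have "(BS B \<Gamma> ** \<Gamma>) *v (transpose (Pi_mat B \<Gamma>) *v \<eta> t)
          = (BG B ** Pi_mat B \<Gamma> ** \<Gamma> ** Pt) *v \<eta> t"
        by (simp add: BS_def Pt_def matrix_vector_mul_assoc matrix_mul_assoc del: transpose_matrix_vector)
      ultimately show ?thesis
        by (subst A3) (simp add: matrix_vector_mult_add_rdistrib)
    qed
    show "\<exists>d. (\<omega> has_vector_derivative d) (at t within {0..}) \<and>
          M *v d = - (A *v \<omega> t) - (BS B \<Gamma> ** \<Gamma>) *v (transpose (Pi_mat B \<Gamma>) *v \<eta> t) + u -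
                   p_hat B \<Gamma> ((BL B ** \<Gamma>) *v \<eta> 0)"
      using d key by (intro exI[of _ d]) (simp add: algebra_simps)
  qed
qed

end
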